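(* Assume the standing setting described in the context. Let $\boldsymbol w_h^R\in H(\mathrm{div},\Omega)$ satisfy \[ \tau\,\mathrm{div}\,\boldsymbol w_h^R=g+\frac{p_h-P_h^1\varphi_h}{\lambda}\quad\text{in }\Omega, \] and let $C_F>0$ be the Poincaré–Friedrichs constant, i.e. $\|\psi\|\le C_F\|\nabla\psi\|$ for all $\psi\in H_0^1(\Omega)$. Then \[ \frac34\tau\|\nabla(\varphi-\varphi_h)\|^2+\frac2\lambda\big(\varphi-\varphi_h-(p-p_h),\varphi-\varphi_h\big)\le \eta_F^2+4C_F^2\eta_P^2, \] where $\eta_F=\tau^{1/2}\|\boldsymbol w_h^R+\nabla\varphi_h\|$ and $\eta_P=\frac{1}{\lambda\tau^{1/2}}\|\varphi_h-P_h^1\varphi_h\|$.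
   Context: Standing setting: $\Omega\subset\mathbb R^d$, $d\in\{2,3\}$, is a bounded polygonal/polyhedral Lipschitz domain with a conforming simplicial triangulation $\mathcal T_h$. $(\cdot,\cdot)$ denotes the $L^2(\Omega)$ inner product and $\|\cdot\|$ the $L^2(\Omega)$ norm. Parameters $\mu,\lambda,\tau>0$; data $\boldsymbol f\in L^2(\Omega)^d$, $g\in L^2(\Omega)$. $\boldsymbol\varepsilon(\boldsymbol v)=\frac12(\nabla\boldsymbol v+\nabla\boldsymbol v^T)$. The exact solution $(\boldsymbol u,p,\varphi)\in H_0^1(\Omega)^d\times L^2(\Omega)\times H_0^1(\Omega)$ satisfies $2\mu(\boldsymbol\varepsilon(\boldsymbol u),\boldsymbol\varepsilon(\boldsymbol v))-(p,\mathrm{div}\,\boldsymbol v)=(\boldsymbol f,\boldsymbol v)$ for all $\boldsymbol v\in H_0^1(\Omega)^d$; $(\mathrm{div}\,\boldsymbol u,q)+\frac1\lambda(p-\varphi,q)=0$ for all $q\in L^2(\Omega)$; $\frac1\lambda(\varphi-p,\psi)+\tau(\nabla\varphi,\nabla\psi)=(g,\psi)$ for all $\psi\in H_0^1(\Omega)$. The discrete solution $(\boldsymbol u_h,p_h,\varphi_h)\in \mathbf V_h\times Q_h\times S_h$ satisfies the same three equations with all test functions restricted to $\mathbf V_h\times Q_h\times S_h$, where $\mathbf V_h\subset H_0^1(\Omega)^d$ are continuous piecewise quadratic vector fields, $Q_h$ continuous piecewise linear functions, $S_h\subset H_0^1(\Omega)$ continuous piecewise quadratic functions on $\mathcal T_h$.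 $P_h^1$ denotes the $L^2(\Omega)$-orthogonal projection onto the space of (possibly discontinuous) piecewise linear functions on $\mathcal T_h$. *)

theory Defs
  imports "HOL-Analysis.Analysis"
begin

definition lipschitz_domain :: "(real^'n) set \<Rightarrow> bool" where
  "lipschitz_domain \<Omega> \<longleftrightarrow> open \<Omega> \<and> bounded \<Omega> \<and> connected \<Omega> \<and> \<Omega> \<noteq> {} \<and>
     (\<forall>x\<in>frontier \<Omega>. \<exists>e r L (\<gamma>::real^'n \<Rightarrow> real). norm e = 1 \<and> r > 0 \<and>
        L-lipschitz_on {z. z \<bullet> e = 0} \<gamma> \<and>
        \<Omega> \<inter> ball x r = {y \<in> ball x r. y \<bullet> e < \<gamma> (y - (y \<bullet> e) *\<^sub>R e)})"

definition simplex_with_vertices :: "(real^'n) set \<Rightarrow> (real^'n) set \<Rightarrow> bool" where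
  "simplex_with_vertices V T \<longleftrightarrow> finite V \<and> card V = CARD('n) + 1 \<and> \<not> affine_dependent V
     \<and> T = convex hull V"

definition conforming_triangulation :: "(real^'n) set \<Rightarrow> (real^'n) set set \<Rightarrow> bool" where
  "conforming_triangulation \<Omega> \<T> \<longleftrightarrow> finite \<T> \<and> \<T> \<noteq> {} \<and>
     (\<forall>T\<in>\<T>. \<exists>V. simplex_with_vertices V T) \<and> \<Union>\<T> = closure \<Omega> \<and>
     (\<forall>T\<in>\<T>. \<forall>T'\<in>\<T>. \<forall>V V'. simplex_with_vertices V T \<and> simplex_with_vertices V' T'
         \<longrightarrow> T \<inter> T' = convex hull (V \<inter> V'))"

definition L2 :: "(real^'n) set \<Rightarrow> (real^'n \<Rightarrow> real) \<Rightarrow> bool" where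
  "L2 \<Omega> f \<longleftrightarrow> f \<in> borel_measurable (lebesgue_on \<Omega>) \<and> integrable (lebesgue_on \<Omega>) (\<lambda>x. (f x)\<^sup>2)"

definition L2v :: "(real^'n) set \<Rightarrow> (real^'n \<Rightarrow> real^'m) \<Rightarrow> bool" where
  "L2v \<Omega> F \<longleftrightarrow> F \<in> borel_measurable (lebesgue_on \<Omega>) \<and> integrable (lebesgue_on \<Omega>) (\<lambda>x. (norm (F x))\<^sup>2)"

definition ip :: "(real^'n) set \<Rightarrow> (real^'n \<Rightarrow> real) \<Rightarrow> (real^'n \<Rightarrow> real) \<Rightarrow> real" where
  "ip \<Omega> f g = (\<integral>x. f x * g x \<partial>lebesgue_on \<Omega>)"

definition ipv :: "(real^'n) set \<Rightarrow> (real^'n \<Rightarrow> real^'m) \<Rightarrow> (real^'n \<Rightarrow> real^'m) \<Rightarrow> real" where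
  "ipv \<Omega> F G = (\<integral>x. F x \<bullet> G x \<partial>lebesgue_on \<Omega>)"

definition frob :: "real^'n^'n \<Rightarrow> real^'n^'n \<Rightarrow> real" where
  "frob A B = (\<Sum>i\<in>UNIV. A $ i \<bullet> B $ i)"

definition ipm :: "(real^'n) set \<Rightarrow> (real^'n \<Rightarrow> real^'n^'n) \<Rightarrow> (real^'n \<Rightarrow> real^'n^'n) \<Rightarrow> real" where
  "ipm \<Omega> A B = (\<integral>x. frob (A x) (B x) \<partial>lebesgue_on \<Omega>)"

definition nrm :: "(real^'n) set \<Rightarrow> (real^'n \<Rightarrow> real) \<Rightarrow> real" where
  "nrm \<Omega> f = sqrt (ip \<Omega> f f)"

definition nrmv :: "(real^'n) set \<Rightarrow> (real^'n \<Rightarrow> real^'m) \<Rightarrow> real" where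
  "nrmv \<Omega> F = sqrt (ipv \<Omega> F F)"

definition partial_fun :: "'n \<Rightarrow> (real^'n \<Rightarrow> real) \<Rightarrow> real^'n \<Rightarrow> real" where
  "partial_fun i f = (\<lambda>x. frechet_derivative f (at x) (axis i 1))"

definition Cinf :: "(real^'n \<Rightarrow> real) \<Rightarrow> bool" where
  "Cinf f \<longleftrightarrow> (\<forall>is::'n list. continuous_on UNIV (foldr partial_fun is f) \<and>
                             (\<forall>x. foldr partial_fun is f differentiable (at x)))"

definition test_fun :: "(real^'n) set \<Rightarrow> (real^'n \<Rightarrow> real) \<Rightarrow> bool" where
  "test_fun \<Omega> \<phi> \<longleftrightarrow> Cinf \<phi> \<and> compact (closure {x. \<phi> x \<noteq> 0}) \<and> closure {x. \<phi> x \<noteq> 0} \<subseteq> \<Omega>"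

definition cgrad :: "(real^'n \<Rightarrow> real) \<Rightarrow> real^'n \<Rightarrow> real^'n" where
  "cgrad \<phi> x = (\<chi> i. partial_fun i \<phi> x)"

definition weak_grad :: "(real^'n) set \<Rightarrow> (real^'n \<Rightarrow> real) \<Rightarrow> (real^'n \<Rightarrow> real^'n) \<Rightarrow> bool" where
  "weak_grad \<Omega> u G \<longleftrightarrow> (\<forall>\<phi>. test_fun \<Omega> \<phi> \<longrightarrow>
      (\<integral>x. u x *\<^sub>R cgrad \<phi> x \<partial>lebesgue_on \<Omega>) = - (\<integral>x. \<phi> x *\<^sub>R G x \<partial>lebesgue_on \<Omega>))"

definition weak_div :: "(real^'n) set \<Rightarrow> (real^'n \<Rightarrow> real^'n) \<Rightarrow> (real^'n \<Rightarrow> real) \<Rightarrow> bool" where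
  "weak_div \<Omega> w D \<longleftrightarrow> (\<forall>\<phi>. test_fun \<Omega> \<phi> \<longrightarrow>
      (\<integral>x. w x \<bullet> cgrad \<phi> x \<partial>lebesgue_on \<Omega>) = - (\<integral>x. D x * \<phi> x \<partial>lebesgue_on \<Omega>))"

definition H1 :: "(real^'n) set \<Rightarrow> (real^'n \<Rightarrow> real) \<Rightarrow> (real^'n \<Rightarrow> real^'n) \<Rightarrow> bool" where
  "H1 \<Omega> u G \<longleftrightarrow> L2 \<Omega> u \<and> L2v \<Omega> G \<and> weak_grad \<Omega> u G"

definition H01 :: "(real^'n) set \<Rightarrow> (real^'n \<Rightarrow> real) \<Rightarrow> (real^'n \<Rightarrow> real^'n) \<Rightarrow> bool" where
  "H01 \<Omega> u G \<longleftrightarrow> H1 \<Omega> u G \<and>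
     (\<exists>\<phi>s. (\<forall>k. test_fun \<Omega> (\<phi>s k)) \<and>
        (\<lambda>k. (nrm \<Omega> (\<lambda>x. u x - \<phi>s k x))\<^sup>2 + (nrmv \<Omega> (\<lambda>x. G x - cgrad (\<phi>s k) x))\<^sup>2)
          \<longlonglongrightarrow> 0)"

text \<open>Vector fields in (H_0^1)^d; Dv x is the Jacobian, row i = gradient of component i.\<close>
definition H01v :: "(real^'n) set \<Rightarrow> (real^'n \<Rightarrow> real^'n) \<Rightarrow> (real^'n \<Rightarrow> real^'n^'n) \<Rightarrow> bool" where
  "H01v \<Omega> v Dv \<longleftrightarrow> (\<forall>i. H01 \<Omega> (\<lambda>x. v x $ i) (\<lambda>x. Dv x $ i))"

definition Hdiv :: "(real^'n) set \<Rightarrow> (real^'n \<Rightarrow> real^'n) \<Rightarrow> bool" where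
  "Hdiv \<Omega> w \<longleftrightarrow> L2v \<Omega> w \<and> (\<exists>D. L2 \<Omega> D \<and> weak_div \<Omega> w D)"

definition symgrad :: "real^'n^'n \<Rightarrow> real^'n^'n" where
  "symgrad A = (1/2) *\<^sub>R (A + transpose A)"

definition divj :: "real^'n^'n \<Rightarrow> real" where
  "divj A = trace A"

definition pw_linear :: "(real^'n) set set \<Rightarrow> (real^'n \<Rightarrow> real) \<Rightarrow> bool" where
  "pw_linear \<T> f \<longleftrightarrow> (\<forall>T\<in>\<T>. \<exists>c b. \<forall>x\<in>T. f x = c + b \<bullet> x)"

definition pw_quadratic :: "(real^'n) set set \<Rightarrow> (real^'n \<Rightarrow> real) \<Rightarrow> bool" where
  "pw_quadratic \<T> f \<longleftrightarrow> (\<forall>T\<in>\<T>. \<exists>c b (A::real^'n^'n). \<forall>x\<in>T. f x = c + b \<bullet> x + x \<bullet> (A *v x))"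

definition Qh :: "(real^'n) set \<Rightarrow> (real^'n) set set \<Rightarrow> (real^'n \<Rightarrow> real) set" where
  "Qh \<Omega> \<T> = {q. continuous_on (closure \<Omega>) q \<and> pw_linear \<T> q}"

definition Sh :: "(real^'n) set \<Rightarrow> (real^'n) set set \<Rightarrow> (real^'n \<Rightarrow> real) \<Rightarrow> (real^'n \<Rightarrow> real^'n) \<Rightarrow> bool" where
  "Sh \<Omega> \<T> \<psi> G \<longleftrightarrow> H01 \<Omega> \<psi> G \<and> continuous_on (closure \<Omega>) \<psi> \<and> pw_quadratic \<T> \<psi>"

definition Vh :: "(real^'n) set \<Rightarrow> (real^'n) set set \<Rightarrow> (real^'n \<Rightarrow> real^'n) \<Rightarrow> (real^'n \<Rightarrow> real^'n^'n) \<Rightarrow> bool" where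
  "Vh \<Omega> \<T> v Dv \<longleftrightarrow> H01v \<Omega> v Dv \<and>
     (\<forall>i. continuous_on (closure \<Omega>) (\<lambda>x. v x $ i) \<and> pw_quadratic \<T> (\<lambda>x. v x $ i))"

text \<open>Discontinuous piecewise linear functions (prescribed on element interiors, i.e. a.e.).\<close>
definition DG1 :: "(real^'n) set set \<Rightarrow> (real^'n \<Rightarrow> real) \<Rightarrow> bool" where
  "DG1 \<T> q \<longleftrightarrow> (\<forall>T\<in>\<T>. \<exists>c b. \<forall>x\<in>interior T. q x = c + b \<bullet> x)"

definition is_P1_projection :: "(real^'n) set \<Rightarrow> (real^'n) set set \<Rightarrow> (real^'n \<Rightarrow> real) \<Rightarrow> (real^'n \<Rightarrow> real) \<Rightarrow> bool" where
  "is_P1_projection \<Omega> \<T> f Pf \<longleftrightarrow> L2 \<Omega> Pf \<and> DG1 \<T> Pf \<and>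
     (\<forall>q. L2 \<Omega> q \<and> DG1 \<T> q \<longrightarrow> ip \<Omega> (\<lambda>x. f x - Pf x) q = 0)"

end

theory Submission
  imports Defs
begin


lemma fin_meas: "\<Omega> \<in> lmeasurable \<Longrightarrow> finite_measure (lebesgue_on \<Omega>)"
  by (rule finite_measure_lebesgue_on)

lemma L2_sq_int: "L2 \<Omega> f \<Longrightarrow> integrable (lebesgue_on \<Omega>) (\<lambda>x. f x * f x)"
  unfolding L2_def by (simp add: power2_eq_square)

lemma L2_mult_int:
  assumes "L2 \<Omega> f" "L2 \<Omega> g"
  shows "integrable (lebesgue_on \<Omega>) (\<lambda>x. f x * g x)"
proof (rule Bochner_Integration.integrable_bound)
  show "integrable (lebesgue_on \<Omega>) (\<lambda>x. (f x)\<^sup>2 + (g x)\<^sup>2)"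
    using assms unfolding L2_def by auto
  show "(\<lambda>x. f x * g x) \<in> borel_measurable (lebesgue_on \<Omega>)"
    using assms unfolding L2_def by auto
  show "AE x in lebesgue_on \<Omega>. norm (f x * g x) \<le> norm ((f x)\<^sup>2 + (g x)\<^sup>2)"
  proof (rule AE_I2)
    fix x
    have "0 \<le> (\<bar>f x\<bar> - \<bar>g x\<bar>)\<^sup>2" by simp
    then have a: "\<bar>f x\<bar> * (\<bar>g x\<bar> * 2) \<le> f x * f x + g x * g x"
      by (simp add: abs_mult power2_eq_square algebra_simps)
    have "0 \<le> \<bar>f x\<bar> * \<bar>g x\<bar>" by simp
    with a have "\<bar>f x\<bar> * \<bar>g x\<bar> \<le> f x * f x + g x * g x" by linarith
    then have "\<bar>f x * g x\<bar> \<le> (f x)\<^sup>2 + (g x)\<^sup>2"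
      by (simp add: abs_mult power2_eq_square)
    then show "norm (f x * g x) \<le> norm ((f x)\<^sup>2 + (g x)\<^sup>2)" by simp
  qed
qed

lemma L2_diff:
  assumes "L2 \<Omega> f" "L2 \<Omega> g"
  shows "L2 \<Omega> (\<lambda>x. f x - g x)"
proof -
  have m: "(\<lambda>x. f x - g x) \<in> borel_measurable (lebesgue_on \<Omega>)"
    using assms unfolding L2_def by auto
  have "integrable (lebesgue_on \<Omega>) (\<lambda>x. (f x - g x)\<^sup>2)"
  proof -
    have "integrable (lebesgue_on \<Omega>) (\<lambda>x. f x * f x - 2 * (f x * g x) + g x * g x)"
      using L2_mult_int[OF assms] L2_sq_int[OF assms(1)] L2_sq_int[OF assms(2)] by auto
    then show ?thesis by (simp add: power2_eq_square algebra_simps)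
  qed
  then show ?thesis using m unfolding L2_def by auto
qed

lemma L2_add:
  assumes "L2 \<Omega> f" "L2 \<Omega> g"
  shows "L2 \<Omega> (\<lambda>x. f x + g x)"
proof -
  have m: "(\<lambda>x. f x + g x) \<in> borel_measurable (lebesgue_on \<Omega>)"
    using assms unfolding L2_def by auto
  have "integrable (lebesgue_on \<Omega>) (\<lambda>x. (f x + g x)\<^sup>2)"
  proof -
    have "integrable (lebesgue_on \<Omega>) (\<lambda>x. f x * f x + 2 * (f x * g x) + g x * g x)"
      using L2_mult_int[OF assms] L2_sq_int[OF assms(1)] L2_sq_int[OF assms(2)] by auto
    then show ?thesis by (simp add: power2_eq_square algebra_simps)
  qed
  then show ?thesis using m unfolding L2_def by auto
qed

lemma L2_scale:
  assumes "L2 \<Omega> f"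
  shows "L2 \<Omega> (\<lambda>x. c * f x)"
proof -
  have "integrable (lebesgue_on \<Omega>) (\<lambda>x. c\<^sup>2 * (f x)\<^sup>2)" using assms unfolding L2_def by auto
  moreover have "(\<lambda>x. c * f x) \<in> borel_measurable (lebesgue_on \<Omega>)"
  proof -
    have [measurable]: "f \<in> borel_measurable (lebesgue_on \<Omega>)" using assms unfolding L2_def by auto
    show ?thesis by measurable
  qed
  ultimately show ?thesis unfolding L2_def by (simp add: power_mult_distrib)
qed

lemma L2_bounded_cont:
  assumes "\<Omega> \<in> lmeasurable" "continuous_on \<Omega> f" "\<And>x. x \<in> \<Omega> \<Longrightarrow> \<bar>f x\<bar> \<le> B"
  shows "L2 \<Omega> f"
proof -
  have m: "f \<in> borel_measurable (lebesgue_on \<Omega>)"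
    using assms continuous_imp_measurable_on_sets_lebesgue by blast
  interpret finite_measure "lebesgue_on \<Omega>" using assms(1) by (rule fin_meas)
  have "integrable (lebesgue_on \<Omega>) (\<lambda>x. (f x)\<^sup>2)"
  proof (rule Bochner_Integration.integrable_bound)
    show "integrable (lebesgue_on \<Omega>) (\<lambda>x. B\<^sup>2)" by simp
    show "(\<lambda>x. (f x)\<^sup>2) \<in> borel_measurable (lebesgue_on \<Omega>)" using m by auto
    show "AE x in lebesgue_on \<Omega>. norm ((f x)\<^sup>2) \<le> norm (B\<^sup>2)"
    proof -
      have "\<forall>x\<in>space (lebesgue_on \<Omega>). norm ((f x)\<^sup>2) \<le> norm (B\<^sup>2)"
      proof
        fix x assume "x \<in> space (lebesgue_on \<Omega>)"
        then have "x \<in> \<Omega>" by simp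
        then have "\<bar>f x\<bar> \<le> B" by (rule assms(3))
        then show "norm ((f x)\<^sup>2) \<le> norm (B\<^sup>2)"
        proof -
          have "\<bar>f x\<bar> \<le> \<bar>B\<bar>" using \<open>\<bar>f x\<bar> \<le> B\<close> by linarith
          then have "(f x)\<^sup>2 \<le> B\<^sup>2" using abs_le_square_iff by blast
          then show ?thesis by simp
        qed
      qed
      then show ?thesis by (intro AE_I2) auto
    qed
  qed
  then show ?thesis using m unfolding L2_def by auto
qed




lemma disc:
  fixes A B C :: real
  assumes "\<And>t. 0 \<le> A - 2 * t * C + t\<^sup>2 * B" "0 \<le> B"
  shows "C\<^sup>2 \<le> A * B"
proof (cases "B = 0")
  case True
  show ?thesis
  proof (cases "C = 0")
    case False
    have "0 \<le> A - 2 * ((A + 1) / (2 * C)) * C" using assms(1)[of "(A + 1) / (2 * C)"] True by simp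
    with False show ?thesis by (simp add: field_simps)
  qed (use True in simp)
next
  case False
  with assms(2) have Bp: "B > 0" by simp
  have "0 \<le> A - 2 * (C / B) * C + (C / B)\<^sup>2 * B" by (rule assms(1))
  also have "\<dots> = A - C\<^sup>2 / B" using Bp by (simp add: field_simps power2_eq_square)
  finally show ?thesis using Bp by (simp add: field_simps)
qed

lemma ip_expand:
  assumes "L2 \<Omega> f" "L2 \<Omega> g"
  shows "ip \<Omega> (\<lambda>x. f x - t * g x) (\<lambda>x. f x - t * g x) = ip \<Omega> f f - 2 * t * ip \<Omega> f g + t\<^sup>2 * ip \<Omega> g g"
proof -
  have i1: "integrable (lebesgue_on \<Omega>) (\<lambda>x. f x * f x)" using L2_mult_int[OF assms(1) assms(1)] .
  have i2: "integrable (lebesgue_on \<Omega>) (\<lambda>x. f x * g x)" using L2_mult_int[OF assms] .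
  have i3: "integrable (lebesgue_on \<Omega>) (\<lambda>x. g x * g x)" using L2_mult_int[OF assms(2) assms(2)] .
  have "(\<lambda>x. (f x - t * g x) * (f x - t * g x)) = (\<lambda>x. f x * f x - (2 * t) * (f x * g x) + t\<^sup>2 * (g x * g x))"
    by (auto simp: algebra_simps power2_eq_square)
  then show ?thesis unfolding ip_def using i1 i2 i3
    by (simp add: integral_add integral_diff)
qed

lemma ip_nonneg: "0 \<le> ip \<Omega> f f"
  unfolding ip_def by (intro integral_nonneg_AE AE_I2) simp

lemma ip_CS:
  assumes "L2 \<Omega> f" "L2 \<Omega> g"
  shows "\<bar>ip \<Omega> f g\<bar> \<le> nrm \<Omega> f * nrm \<Omega> g"
proof -
  have "(ip \<Omega> f g)\<^sup>2 \<le> ip \<Omega> f f * ip \<Omega> g g"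
  proof (rule disc)
    fix t show "0 \<le> ip \<Omega> f f - 2 * t * ip \<Omega> f g + t\<^sup>2 * ip \<Omega> g g"
      using ip_nonneg[of \<Omega> "\<lambda>x. f x - t * g x"] ip_expand[OF assms, of t] by simp
  qed (rule ip_nonneg)
  then have "sqrt ((ip \<Omega> f g)\<^sup>2) \<le> sqrt (ip \<Omega> f f * ip \<Omega> g g)" by (rule real_sqrt_le_mono)
  then show ?thesis unfolding nrm_def by (simp add: real_sqrt_mult)
qed

lemma ip_sym: "ip \<Omega> f g = ip \<Omega> g f"
  unfolding ip_def by (simp add: mult.commute)

lemma nrm_sq: "(nrm \<Omega> f)\<^sup>2 = ip \<Omega> f f"
  unfolding nrm_def by (rule real_sqrt_pow2[OF ip_nonneg])

lemma nrm_nonneg: "0 \<le> nrm \<Omega> f" unfolding nrm_def by (simp add: ip_nonneg)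

lemma L2v_inner_int:
  assumes "L2v \<Omega> F" "L2v \<Omega> G"
  shows "integrable (lebesgue_on \<Omega>) (\<lambda>x. F x \<bullet> G x)"
proof (rule Bochner_Integration.integrable_bound)
  show "integrable (lebesgue_on \<Omega>) (\<lambda>x. (norm (F x))\<^sup>2 + (norm (G x))\<^sup>2)"
    using assms unfolding L2v_def by auto
  show "(\<lambda>x. F x \<bullet> G x) \<in> borel_measurable (lebesgue_on \<Omega>)"
    using assms unfolding L2v_def by auto
  show "AE x in lebesgue_on \<Omega>. norm (F x \<bullet> G x) \<le> norm ((norm (F x))\<^sup>2 + (norm (G x))\<^sup>2)"
  proof (rule AE_I2)
    fix x
    have "0 \<le> (norm (F x) - norm (G x))\<^sup>2" by simp
    then have a: "norm (F x) * (norm (G x) * 2) \<le> norm (F x) * norm (F x) + norm (G x) * norm (G x)"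
      by (simp add: power2_eq_square algebra_simps)
    have "0 \<le> norm (F x) * norm (G x)" by simp
    with a have "norm (F x) * norm (G x) \<le> norm (F x) * norm (F x) + norm (G x) * norm (G x)" by linarith
    then have b: "norm (F x) * norm (G x) \<le> (norm (F x))\<^sup>2 + (norm (G x))\<^sup>2"
      by (simp add: power2_eq_square)
    have "\<bar>F x \<bullet> G x\<bar> \<le> norm (F x) * norm (G x)" by (rule Cauchy_Schwarz_ineq2)
    with b show "norm (F x \<bullet> G x) \<le> norm ((norm (F x))\<^sup>2 + (norm (G x))\<^sup>2)" by simp
  qed
qed

lemma L2v_sq_int: "L2v \<Omega> F \<Longrightarrow> integrable (lebesgue_on \<Omega>) (\<lambda>x. F x \<bullet> F x)"
  using L2v_inner_int by blast

lemma L2v_diff: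
  assumes "L2v \<Omega> F" "L2v \<Omega> G"
  shows "L2v \<Omega> (\<lambda>x. F x - G x)"
proof -
  have m: "(\<lambda>x. F x - G x) \<in> borel_measurable (lebesgue_on \<Omega>)"
    using assms unfolding L2v_def by auto
  have "integrable (lebesgue_on \<Omega>) (\<lambda>x. F x \<bullet> F x - 2 * (F x \<bullet> G x) + G x \<bullet> G x)"
    using L2v_inner_int[OF assms] L2v_sq_int[OF assms(1)] L2v_sq_int[OF assms(2)] by auto
  moreover have "(\<lambda>x. F x \<bullet> F x - 2 * (F x \<bullet> G x) + G x \<bullet> G x) = (\<lambda>x. (norm (F x - G x))\<^sup>2)"
    by (auto simp: power2_norm_eq_inner algebra_simps inner_commute)
  ultimately show ?thesis using m unfolding L2v_def by auto
qed

lemma L2v_add: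
  assumes "L2v \<Omega> F" "L2v \<Omega> G"
  shows "L2v \<Omega> (\<lambda>x. F x + G x)"
proof -
  have m: "(\<lambda>x. F x + G x) \<in> borel_measurable (lebesgue_on \<Omega>)"
    using assms unfolding L2v_def by auto
  have "integrable (lebesgue_on \<Omega>) (\<lambda>x. F x \<bullet> F x + 2 * (F x \<bullet> G x) + G x \<bullet> G x)"
    using L2v_inner_int[OF assms] L2v_sq_int[OF assms(1)] L2v_sq_int[OF assms(2)] by auto
  moreover have "(\<lambda>x. F x \<bullet> F x + 2 * (F x \<bullet> G x) + G x \<bullet> G x) = (\<lambda>x. (norm (F x + G x))\<^sup>2)"
    by (auto simp: power2_norm_eq_inner algebra_simps inner_commute)
  ultimately show ?thesis using m unfolding L2v_def by auto
qed

lemma L2v_scale: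
  assumes "L2v \<Omega> F"
  shows "L2v \<Omega> (\<lambda>x. c *\<^sub>R F x)"
proof -
  have [measurable]: "F \<in> borel_measurable (lebesgue_on \<Omega>)" using assms unfolding L2v_def by auto
  have "integrable (lebesgue_on \<Omega>) (\<lambda>x. c\<^sup>2 * (norm (F x))\<^sup>2)" using assms unfolding L2v_def by auto
  moreover have "(\<lambda>x. c *\<^sub>R F x) \<in> borel_measurable (lebesgue_on \<Omega>)" by measurable
  ultimately show ?thesis unfolding L2v_def by (simp add: power_mult_distrib)
qed

lemma ipv_expand:
  assumes "L2v \<Omega> F" "L2v \<Omega> G"
  shows "ipv \<Omega> (\<lambda>x. F x - t *\<^sub>R G x) (\<lambda>x. F x - t *\<^sub>R G x) = ipv \<Omega> F F - 2 * t * ipv \<Omega> F G + t\<^sup>2 * ipv \<Omega> G G"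
proof -
  have i1: "integrable (lebesgue_on \<Omega>) (\<lambda>x. F x \<bullet> F x)" using L2v_sq_int[OF assms(1)] .
  have i2: "integrable (lebesgue_on \<Omega>) (\<lambda>x. F x \<bullet> G x)" using L2v_inner_int[OF assms] .
  have i3: "integrable (lebesgue_on \<Omega>) (\<lambda>x. G x \<bullet> G x)" using L2v_sq_int[OF assms(2)] .
  have "(\<lambda>x. (F x - t *\<^sub>R G x) \<bullet> (F x - t *\<^sub>R G x)) = (\<lambda>x. F x \<bullet> F x - (2 * t) * (F x \<bullet> G x) + t\<^sup>2 * (G x \<bullet> G x))"
    by (auto simp: algebra_simps power2_eq_square inner_commute)
  then show ?thesis unfolding ipv_def using i1 i2 i3
    by (simp add: integral_add integral_diff)
qed

lemma ipv_nonneg: "0 \<le> ipv \<Omega> F F"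
  unfolding ipv_def by (intro integral_nonneg_AE AE_I2) simp

lemma ipv_CS:
  assumes "L2v \<Omega> F" "L2v \<Omega> G"
  shows "\<bar>ipv \<Omega> F G\<bar> \<le> nrmv \<Omega> F * nrmv \<Omega> G"
proof -
  have "(ipv \<Omega> F G)\<^sup>2 \<le> ipv \<Omega> F F * ipv \<Omega> G G"
  proof (rule disc)
    fix t show "0 \<le> ipv \<Omega> F F - 2 * t * ipv \<Omega> F G + t\<^sup>2 * ipv \<Omega> G G"
      using ipv_nonneg[of \<Omega> "\<lambda>x. F x - t *\<^sub>R G x"] ipv_expand[OF assms, of t] by simp
  qed (rule ipv_nonneg)
  then have "sqrt ((ipv \<Omega> F G)\<^sup>2) \<le> sqrt (ipv \<Omega> F F * ipv \<Omega> G G)" by (rule real_sqrt_le_mono)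
  then show ?thesis unfolding nrmv_def by (simp add: real_sqrt_mult)
qed

lemma nrmv_sq: "(nrmv \<Omega> F)\<^sup>2 = ipv \<Omega> F F"
  unfolding nrmv_def by (rule real_sqrt_pow2[OF ipv_nonneg])

lemma nrmv_nonneg: "0 \<le> nrmv \<Omega> F" unfolding nrmv_def by (simp add: ipv_nonneg)




lemma Cinf_cont: "Cinf f \<Longrightarrow> continuous_on UNIV f"
  unfolding Cinf_def by (metis foldr_Nil id_apply)

lemma Cinf_partial_cont: "Cinf f \<Longrightarrow> continuous_on UNIV (partial_fun i f)"
  unfolding Cinf_def by (metis foldr_Cons foldr_Nil id_apply comp_apply)

lemma cgrad_cont: "Cinf f \<Longrightarrow> continuous_on UNIV (cgrad f)"
proof -
  assume "Cinf f"
  then have "continuous_on UNIV (\<lambda>x. \<chi> i. partial_fun i f x)"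
    by (intro continuous_on_vec_lambda) (rule Cinf_partial_cont)
  moreover have "cgrad f = (\<lambda>x. \<chi> i. partial_fun i f x)" by (rule ext) (simp add: cgrad_def)
  ultimately show ?thesis by simp
qed

lemma partial_fun_diff:
  assumes "\<And>x. F differentiable (at x)" "\<And>x. G differentiable (at x)"
  shows "partial_fun i (\<lambda>x. F x - G x) = (\<lambda>x. partial_fun i F x - partial_fun i G x)"
proof (rule ext)
  fix x
  have "(F has_derivative frechet_derivative F (at x)) (at x)"
    using assms(1) frechet_derivative_works by blast
  moreover have "(G has_derivative frechet_derivative G (at x)) (at x)"
    using assms(2) frechet_derivative_works by blast
  ultimately have "((\<lambda>x. F x - G x) has_derivative
      (\<lambda>h. frechet_derivative F (at x) h - frechet_derivative G (at x) h)) (at x)"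
    by (rule has_derivative_diff)
  then have "(\<lambda>h. frechet_derivative F (at x) h - frechet_derivative G (at x) h)
      = frechet_derivative (\<lambda>x. F x - G x) (at x)" by (rule frechet_derivative_at)
  then show "partial_fun i (\<lambda>x. F x - G x) x = partial_fun i F x - partial_fun i G x"
    unfolding partial_fun_def by metis
qed

lemma foldr_diff:
  assumes "Cinf f" "Cinf g"
  shows "foldr partial_fun is (\<lambda>x. f x - g x) = (\<lambda>x. foldr partial_fun is f x - foldr partial_fun is g x)"
proof (induction "is")
  case Nil
  then show ?case by simp
next
  case (Cons i "is")
  have "foldr partial_fun (i # is) (\<lambda>x. f x - g x) = partial_fun i (foldr partial_fun is (\<lambda>x. f x - g x))"
    by simp
  also have "\<dots> = partial_fun i (\<lambda>x. foldr partial_fun is f x - foldr partial_fun is g x)"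
    using Cons by simp
  also have "\<dots> = (\<lambda>x. partial_fun i (foldr partial_fun is f) x - partial_fun i (foldr partial_fun is g) x)"
    by (rule partial_fun_diff) (use assms in \<open>auto simp: Cinf_def\<close>)
  finally show ?case by simp
qed

lemma Cinf_diff:
  assumes "Cinf f" "Cinf g"
  shows "Cinf (\<lambda>x. f x - g x)"
  unfolding Cinf_def
proof
  fix "is" :: "'a list"
  have c1: "continuous_on UNIV (foldr partial_fun is f)" "continuous_on UNIV (foldr partial_fun is g)"
    using assms unfolding Cinf_def by auto
  have d1: "\<And>x. foldr partial_fun is f differentiable (at x)" "\<And>x. foldr partial_fun is g differentiable (at x)"
    using assms unfolding Cinf_def by auto
  show "continuous_on UNIV (foldr partial_fun is (\<lambda>x. f x - g x)) \<and>
        (\<forall>x. foldr partial_fun is (\<lambda>x. f x - g x) differentiable at x)"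
    unfolding foldr_diff[OF assms]
    using c1 d1 by (auto intro!: continuous_on_diff differentiable_diff)
qed

lemma cgrad_diff:
  assumes "Cinf f" "Cinf g"
  shows "cgrad (\<lambda>x. f x - g x) x = cgrad f x - cgrad g x"
proof -
  have "\<And>i. partial_fun i (\<lambda>x. f x - g x) x = partial_fun i f x - partial_fun i g x"
    using foldr_diff[OF assms, of "[i]" for i] by (metis foldr_Cons foldr_Nil id_apply comp_apply)
  then show ?thesis unfolding cgrad_def by (simp add: vec_eq_iff)
qed

lemma test_fun_diff:
  assumes "test_fun \<Omega> f" "test_fun \<Omega> g"
  shows "test_fun \<Omega> (\<lambda>x. f x - g x)"
proof -
  have sub: "closure {x. f x - g x \<noteq> 0} \<subseteq> closure {x. f x \<noteq> 0} \<union> closure {x. g x \<noteq> 0}"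
  proof -
    have "{x. f x - g x \<noteq> 0} \<subseteq> {x. f x \<noteq> 0} \<union> {x. g x \<noteq> 0}" by auto
    then have "closure {x. f x - g x \<noteq> 0} \<subseteq> closure ({x. f x \<noteq> 0} \<union> {x. g x \<noteq> 0})"
      by (rule closure_mono)
    then show ?thesis by (simp add: closure_Un)
  qed
  have "compact ((closure {x. f x \<noteq> 0} \<union> closure {x. g x \<noteq> 0}) \<inter> closure {x. f x - g x \<noteq> 0})"
    using assms unfolding test_fun_def by (intro compact_Int_closed compact_Un) auto
  moreover have "(closure {x. f x \<noteq> 0} \<union> closure {x. g x \<noteq> 0}) \<inter> closure {x. f x - g x \<noteq> 0}
      = closure {x. f x - g x \<noteq> 0}" using sub by blast
  ultimately have "compact (closure {x. f x - g x \<noteq> 0})" by simp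
  moreover have "closure {x. f x - g x \<noteq> 0} \<subseteq> \<Omega>" using sub assms unfolding test_fun_def by blast
  moreover have "Cinf (\<lambda>x. f x - g x)" using assms unfolding test_fun_def by (intro Cinf_diff) auto
  ultimately show ?thesis unfolding test_fun_def by blast
qed

lemma cont_bounded_on:
  fixes f :: "'a::metric_space \<Rightarrow> 'b::real_normed_vector"
  assumes "continuous_on UNIV f" "compact K"
  obtains B where "B > 0" "\<And>x. x \<in> K \<Longrightarrow> norm (f x) \<le> B"
proof -
  have "compact (f ` K)" using assms by (meson compact_continuous_image continuous_on_subset subset_UNIV)
  then have "bounded (f ` K)" by (rule compact_imp_bounded)
  then obtain B where "B > 0" "\<forall>y\<in>f ` K. norm y \<le> B" by (auto simp: bounded_pos)
  then show ?thesis using that by auto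
qed

lemma L2v_bounded_cont:
  fixes F :: "real^'n \<Rightarrow> real^'m"
  assumes "\<Omega> \<in> lmeasurable" "continuous_on \<Omega> F" "\<And>x. x \<in> \<Omega> \<Longrightarrow> norm (F x) \<le> B"
  shows "L2v \<Omega> F"
proof -
  have m: "F \<in> borel_measurable (lebesgue_on \<Omega>)"
    using assms continuous_imp_measurable_on_sets_lebesgue by blast
  interpret finite_measure "lebesgue_on \<Omega>" using assms(1) by (rule fin_meas)
  have "integrable (lebesgue_on \<Omega>) (\<lambda>x. (norm (F x))\<^sup>2)"
  proof (rule Bochner_Integration.integrable_bound)
    show "integrable (lebesgue_on \<Omega>) (\<lambda>x. B\<^sup>2)" by simp
    show "(\<lambda>x. (norm (F x))\<^sup>2) \<in> borel_measurable (lebesgue_on \<Omega>)" using m by auto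
    show "AE x in lebesgue_on \<Omega>. norm ((norm (F x))\<^sup>2) \<le> norm (B\<^sup>2)"
    proof -
      have "\<forall>x\<in>space (lebesgue_on \<Omega>). norm ((norm (F x))\<^sup>2) \<le> norm (B\<^sup>2)"
      proof
        fix x assume "x \<in> space (lebesgue_on \<Omega>)"
        then have "x \<in> \<Omega>" by simp
        then have "norm (F x) \<le> B" by (rule assms(3))
        then show "norm ((norm (F x))\<^sup>2) \<le> norm (B\<^sup>2)"
        proof -
          have "\<bar>norm (F x)\<bar> \<le> \<bar>B\<bar>" using \<open>norm (F x) \<le> B\<close> by simp
          then have "(norm (F x))\<^sup>2 \<le> B\<^sup>2" using abs_le_square_iff by blast
          then show ?thesis by simp
        qed
      qed
      then show ?thesis by (intro AE_I2) auto
    qed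
  qed
  then show ?thesis using m unfolding L2v_def by auto
qed

lemma test_L2:
  assumes "\<Omega> \<in> lmeasurable" "bounded \<Omega>" "test_fun \<Omega> f"
  shows "L2 \<Omega> f" "L2v \<Omega> (cgrad f)"
proof -
  have c: "continuous_on UNIV f" "continuous_on UNIV (cgrad f)"
    using assms(3) unfolding test_fun_def by (auto intro: Cinf_cont cgrad_cont)
  have K: "compact (closure \<Omega>)" using assms(2) by (simp add: compact_closure)
  obtain B where "\<And>x. x \<in> closure \<Omega> \<Longrightarrow> norm (f x) \<le> B" using cont_bounded_on[OF c(1) K] by blast
  then show "L2 \<Omega> f"
    by (intro L2_bounded_cont[OF assms(1)]) (auto intro: continuous_on_subset[OF c(1)] closure_subset[THEN subsetD])
  obtain B2 where "\<And>x. x \<in> closure \<Omega> \<Longrightarrow> norm (cgrad f x) \<le> B2" using cont_bounded_on[OF c(2) K] by blast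
  then show "L2v \<Omega> (cgrad f)"
    by (intro L2v_bounded_cont[OF assms(1)]) (auto intro: continuous_on_subset[OF c(2)] closure_subset[THEN subsetD])
qed




lemma abs_le_1_sq: "\<bar>u::real\<bar> \<le> 1 + u\<^sup>2"
proof -
  have "0 \<le> (\<bar>u\<bar> - 1)\<^sup>2" by simp
  then have "2 * \<bar>u\<bar> \<le> 1 + u\<^sup>2" by (simp add: power2_eq_square algebra_simps)
  then show ?thesis by simp
qed

lemma int_L2_times_bounded:
  fixes c :: "real^'n \<Rightarrow> real^'m"
  assumes "\<Omega> \<in> lmeasurable" "L2 \<Omega> u" "c \<in> borel_measurable (lebesgue_on \<Omega>)"
    "\<And>x. x \<in> \<Omega> \<Longrightarrow> norm (c x) \<le> B"
  shows "integrable (lebesgue_on \<Omega>) (\<lambda>x. u x *\<^sub>R c x)"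
proof -
  interpret finite_measure "lebesgue_on \<Omega>" using assms(1) by (rule fin_meas)
  have [measurable]: "u \<in> borel_measurable (lebesgue_on \<Omega>)" using assms(2) unfolding L2_def by auto
  note [measurable] = assms(3)
  show ?thesis
  proof (rule Bochner_Integration.integrable_bound)
    show "integrable (lebesgue_on \<Omega>) (\<lambda>x. B * (1 + (u x)\<^sup>2))"
      using assms(2) unfolding L2_def by auto
    show "(\<lambda>x. u x *\<^sub>R c x) \<in> borel_measurable (lebesgue_on \<Omega>)" by measurable
    show "AE x in lebesgue_on \<Omega>. norm (u x *\<^sub>R c x) \<le> norm (B * (1 + (u x)\<^sup>2))"
    proof (intro AE_I2)
      fix x assume "x \<in> space (lebesgue_on \<Omega>)"
      then have x: "x \<in> \<Omega>" by simp
      have cB: "norm (c x) \<le> B" using assms(4)[OF x] .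
      then have B0: "0 \<le> B" by (meson norm_ge_zero order_trans)
      have "norm (u x *\<^sub>R c x) = \<bar>u x\<bar> * norm (c x)" by simp
      also have "\<dots> \<le> (1 + (u x)\<^sup>2) * B"
        by (intro mult_mono abs_le_1_sq cB) (auto simp: B0)
      also have "\<dots> \<le> norm (B * (1 + (u x)\<^sup>2))" using B0 by (simp add: mult.commute)
      finally show "norm (u x *\<^sub>R c x) \<le> norm (B * (1 + (u x)\<^sup>2))" .
    qed
  qed
qed

lemma int_bounded_times_L2v:
  fixes G :: "real^'n \<Rightarrow> real^'m"
  assumes "\<Omega> \<in> lmeasurable" "L2v \<Omega> G" "c \<in> borel_measurable (lebesgue_on \<Omega>)"
    "\<And>x. x \<in> \<Omega> \<Longrightarrow> \<bar>c x\<bar> \<le> B"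
  shows "integrable (lebesgue_on \<Omega>) (\<lambda>x. c x *\<^sub>R G x)"
proof -
  interpret finite_measure "lebesgue_on \<Omega>" using assms(1) by (rule fin_meas)
  have [measurable]: "G \<in> borel_measurable (lebesgue_on \<Omega>)" using assms(2) unfolding L2v_def by auto
  note [measurable] = assms(3)
  show ?thesis
  proof (rule Bochner_Integration.integrable_bound)
    show "integrable (lebesgue_on \<Omega>) (\<lambda>x. B * (1 + (norm (G x))\<^sup>2))"
      using assms(2) unfolding L2v_def by auto
    show "(\<lambda>x. c x *\<^sub>R G x) \<in> borel_measurable (lebesgue_on \<Omega>)" by measurable
    show "AE x in lebesgue_on \<Omega>. norm (c x *\<^sub>R G x) \<le> norm (B * (1 + (norm (G x))\<^sup>2))"
    proof (intro AE_I2)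
      fix x assume "x \<in> space (lebesgue_on \<Omega>)"
      then have x: "x \<in> \<Omega>" by simp
      have cB: "\<bar>c x\<bar> \<le> B" using assms(4)[OF x] .
      then have B0: "0 \<le> B" by (meson abs_ge_zero order_trans)
      have "norm (c x *\<^sub>R G x) = \<bar>c x\<bar> * norm (G x)" by simp
      also have "\<dots> \<le> B * (1 + (norm (G x))\<^sup>2)"
        using abs_le_1_sq[of "norm (G x)"] B0 by (intro mult_mono cB) auto
      also have "\<dots> \<le> norm (B * (1 + (norm (G x))\<^sup>2))" using B0 by simp
      finally show "norm (c x *\<^sub>R G x) \<le> norm (B * (1 + (norm (G x))\<^sup>2))" .
    qed
  qed
qed



lemma test_bounds:
  assumes "bounded \<Omega>" "test_fun \<Omega> f"
  obtains B where "\<And>x. x \<in> \<Omega> \<Longrightarrow> \<bar>f x\<bar> \<le> B" "\<And>x. x \<in> \<Omega> \<Longrightarrow> norm (cgrad f x) \<le> B"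
proof -
  have c: "continuous_on UNIV f" "continuous_on UNIV (cgrad f)"
    using assms(2) unfolding test_fun_def by (auto intro: Cinf_cont cgrad_cont)
  have K: "compact (closure \<Omega>)" using assms(1) by (simp add: compact_closure)
  obtain B1 where B1: "\<And>x. x \<in> closure \<Omega> \<Longrightarrow> norm (f x) \<le> B1" using cont_bounded_on[OF c(1) K] by blast
  obtain B2 where B2: "\<And>x. x \<in> closure \<Omega> \<Longrightarrow> norm (cgrad f x) \<le> B2" using cont_bounded_on[OF c(2) K] by blast
  show ?thesis
  proof (rule that[of "max B1 B2"])
    fix x assume "x \<in> \<Omega>"
    then have x: "x \<in> closure \<Omega>" using closure_subset by blast
    show "\<bar>f x\<bar> \<le> max B1 B2" using B1[OF x] by simp
    show "norm (cgrad f x) \<le> max B1 B2" using B2[OF x] by simp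
  qed
qed

lemma test_meas:
  assumes "\<Omega> \<in> lmeasurable" "test_fun \<Omega> f"
  shows "f \<in> borel_measurable (lebesgue_on \<Omega>)" "cgrad f \<in> borel_measurable (lebesgue_on \<Omega>)"
proof -
  have c: "continuous_on UNIV f" "continuous_on UNIV (cgrad f)"
    using assms(2) unfolding test_fun_def by (auto intro: Cinf_cont cgrad_cont)
  show "f \<in> borel_measurable (lebesgue_on \<Omega>)" "cgrad f \<in> borel_measurable (lebesgue_on \<Omega>)"
    using assms(1) continuous_on_subset[OF c(1), of \<Omega>] continuous_on_subset[OF c(2), of \<Omega>]
    by (auto intro: continuous_imp_measurable_on_sets_lebesgue)
qed



lemma weak_grad_diff:
  assumes "\<Omega> \<in> lmeasurable" "bounded \<Omega>" "H1 \<Omega> u G" "H1 \<Omega> v H"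
  shows "weak_grad \<Omega> (\<lambda>x. u x - v x) (\<lambda>x. G x - H x)"
  unfolding weak_grad_def
proof (intro allI impI)
  fix \<phi> assume t: "test_fun \<Omega> \<phi>"
  obtain B where B: "\<And>x. x \<in> \<Omega> \<Longrightarrow> \<bar>\<phi> x\<bar> \<le> B" "\<And>x. x \<in> \<Omega> \<Longrightarrow> norm (cgrad \<phi> x) \<le> B"
    using test_bounds[OF assms(2) t] by blast
  note m = test_meas[OF assms(1) t]
  have L: "L2 \<Omega> u" "L2 \<Omega> v" "L2v \<Omega> G" "L2v \<Omega> H" using assms(3,4) unfolding H1_def by auto
  have wg: "weak_grad \<Omega> u G" "weak_grad \<Omega> v H" using assms(3,4) unfolding H1_def by auto
  have i1: "integrable (lebesgue_on \<Omega>) (\<lambda>x. u x *\<^sub>R cgrad \<phi> x)"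
    by (rule int_L2_times_bounded[OF assms(1) L(1) m(2) B(2)])
  have i2: "integrable (lebesgue_on \<Omega>) (\<lambda>x. v x *\<^sub>R cgrad \<phi> x)"
    by (rule int_L2_times_bounded[OF assms(1) L(2) m(2) B(2)])
  have i3: "integrable (lebesgue_on \<Omega>) (\<lambda>x. \<phi> x *\<^sub>R G x)"
    by (rule int_bounded_times_L2v[OF assms(1) L(3) m(1) B(1)])
  have i4: "integrable (lebesgue_on \<Omega>) (\<lambda>x. \<phi> x *\<^sub>R H x)"
    by (rule int_bounded_times_L2v[OF assms(1) L(4) m(1) B(1)])
  have "(\<integral>x. (u x - v x) *\<^sub>R cgrad \<phi> x \<partial>lebesgue_on \<Omega>)
      = (\<integral>x. u x *\<^sub>R cgrad \<phi> x - v x *\<^sub>R cgrad \<phi> x \<partial>lebesgue_on \<Omega>)"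
    by (simp add: scaleR_diff_left)
  also have "\<dots> = (\<integral>x. u x *\<^sub>R cgrad \<phi> x \<partial>lebesgue_on \<Omega>) - (\<integral>x. v x *\<^sub>R cgrad \<phi> x \<partial>lebesgue_on \<Omega>)"
    by (rule Bochner_Integration.integral_diff[OF i1 i2])
  also have "\<dots> = - (\<integral>x. \<phi> x *\<^sub>R G x \<partial>lebesgue_on \<Omega>) + (\<integral>x. \<phi> x *\<^sub>R H x \<partial>lebesgue_on \<Omega>)"
    using wg t unfolding weak_grad_def by simp
  also have "\<dots> = - ((\<integral>x. \<phi> x *\<^sub>R G x \<partial>lebesgue_on \<Omega>) - (\<integral>x. \<phi> x *\<^sub>R H x \<partial>lebesgue_on \<Omega>))"
    by simp
  also have "(\<integral>x. \<phi> x *\<^sub>R G x \<partial>lebesgue_on \<Omega>) - (\<integral>x. \<phi> x *\<^sub>R H x \<partial>lebesgue_on \<Omega>)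
      = (\<integral>x. \<phi> x *\<^sub>R G x - \<phi> x *\<^sub>R H x \<partial>lebesgue_on \<Omega>)"
    by (rule Bochner_Integration.integral_diff[OF i3 i4, symmetric])
  also have "\<dots> = (\<integral>x. \<phi> x *\<^sub>R (G x - H x) \<partial>lebesgue_on \<Omega>)"
    by (simp add: scaleR_diff_right)
  finally show "(\<integral>x. (u x - v x) *\<^sub>R cgrad \<phi> x \<partial>lebesgue_on \<Omega>) =
         - (\<integral>x. \<phi> x *\<^sub>R (G x - H x) \<partial>lebesgue_on \<Omega>)" .
qed




lemma ip_diff_le:
  assumes "L2 \<Omega> a" "L2 \<Omega> b"
  shows "ip \<Omega> (\<lambda>x. a x - b x) (\<lambda>x. a x - b x) \<le> 2 * ip \<Omega> a a + 2 * ip \<Omega> b b"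
proof -
  have i1: "integrable (lebesgue_on \<Omega>) (\<lambda>x. (a x - b x) * (a x - b x))"
    using L2_mult_int[OF L2_diff[OF assms] L2_diff[OF assms]] .
  have ia: "integrable (lebesgue_on \<Omega>) (\<lambda>x. a x * a x)" using L2_mult_int[OF assms(1) assms(1)] .
  have ib: "integrable (lebesgue_on \<Omega>) (\<lambda>x. b x * b x)" using L2_mult_int[OF assms(2) assms(2)] .
  have "ip \<Omega> (\<lambda>x. a x - b x) (\<lambda>x. a x - b x) \<le> (\<integral>x. 2 * (a x * a x) + 2 * (b x * b x) \<partial>lebesgue_on \<Omega>)"
    unfolding ip_def
  proof (rule integral_mono)
    fix x
    have "0 \<le> (a x + b x)\<^sup>2" by simp
    then show "(a x - b x) * (a x - b x) \<le> 2 * (a x * a x) + 2 * (b x * b x)"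
      by (simp add: power2_eq_square algebra_simps)
  qed (use i1 ia ib in auto)
  also have "\<dots> = 2 * ip \<Omega> a a + 2 * ip \<Omega> b b"
    unfolding ip_def using ia ib by simp
  finally show ?thesis .
qed

lemma ipv_diff_le:
  assumes "L2v \<Omega> a" "L2v \<Omega> b"
  shows "ipv \<Omega> (\<lambda>x. a x - b x) (\<lambda>x. a x - b x) \<le> 2 * ipv \<Omega> a a + 2 * ipv \<Omega> b b"
proof -
  have i1: "integrable (lebesgue_on \<Omega>) (\<lambda>x. (a x - b x) \<bullet> (a x - b x))"
    using L2v_inner_int[OF L2v_diff[OF assms] L2v_diff[OF assms]] .
  have ia: "integrable (lebesgue_on \<Omega>) (\<lambda>x. a x \<bullet> a x)" using L2v_sq_int[OF assms(1)] .
  have ib: "integrable (lebesgue_on \<Omega>) (\<lambda>x. b x \<bullet> b x)" using L2v_sq_int[OF assms(2)] .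
  have "ipv \<Omega> (\<lambda>x. a x - b x) (\<lambda>x. a x - b x) \<le> (\<integral>x. 2 * (a x \<bullet> a x) + 2 * (b x \<bullet> b x) \<partial>lebesgue_on \<Omega>)"
    unfolding ipv_def
  proof (rule integral_mono)
    fix x
    have "0 \<le> (a x + b x) \<bullet> (a x + b x)" by simp
    then show "(a x - b x) \<bullet> (a x - b x) \<le> 2 * (a x \<bullet> a x) + 2 * (b x \<bullet> b x)"
      by (simp add: algebra_simps inner_commute)
  qed (use i1 ia ib in auto)
  also have "\<dots> = 2 * ipv \<Omega> a a + 2 * ipv \<Omega> b b"
    unfolding ipv_def using ia ib by simp
  finally show ?thesis .
qed

lemma H01_diff:
  assumes "\<Omega> \<in> lmeasurable" "bounded \<Omega>" "H01 \<Omega> u G" "H01 \<Omega> v H"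
  shows "H01 \<Omega> (\<lambda>x. u x - v x) (\<lambda>x. G x - H x)"
proof -
  have h1: "H1 \<Omega> u G" "H1 \<Omega> v H" using assms(3,4) unfolding H01_def by auto
  have L: "L2 \<Omega> u" "L2 \<Omega> v" "L2v \<Omega> G" "L2v \<Omega> H" using h1 unfolding H1_def by auto
  have H1d: "H1 \<Omega> (\<lambda>x. u x - v x) (\<lambda>x. G x - H x)"
    unfolding H1_def using L2_diff[OF L(1,2)] L2v_diff[OF L(3,4)] weak_grad_diff[OF assms(1,2) h1] by auto
  obtain \<phi>s where \<phi>s: "\<And>k. test_fun \<Omega> (\<phi>s k)"
    "(\<lambda>k. (nrm \<Omega> (\<lambda>x. u x - \<phi>s k x))\<^sup>2 + (nrmv \<Omega> (\<lambda>x. G x - cgrad (\<phi>s k) x))\<^sup>2) \<longlonglongrightarrow> 0"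
    using assms(3) unfolding H01_def by blast
  obtain \<chi>s where \<chi>s: "\<And>k. test_fun \<Omega> (\<chi>s k)"
    "(\<lambda>k. (nrm \<Omega> (\<lambda>x. v x - \<chi>s k x))\<^sup>2 + (nrmv \<Omega> (\<lambda>x. H x - cgrad (\<chi>s k) x))\<^sup>2) \<longlonglongrightarrow> 0"
    using assms(4) unfolding H01_def by blast
  define \<psi>s where "\<psi>s = (\<lambda>k x. \<phi>s k x - \<chi>s k x)"
  have t: "\<And>k. test_fun \<Omega> (\<psi>s k)" unfolding \<psi>s_def using \<phi>s(1) \<chi>s(1) by (rule test_fun_diff)
  have cg: "\<And>k x. cgrad (\<psi>s k) x = cgrad (\<phi>s k) x - cgrad (\<chi>s k) x"
    unfolding \<psi>s_def using \<phi>s(1) \<chi>s(1) unfolding test_fun_def by (intro cgrad_diff) auto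
  define A where "A = (\<lambda>k. (nrm \<Omega> (\<lambda>x. u x - \<phi>s k x))\<^sup>2 + (nrmv \<Omega> (\<lambda>x. G x - cgrad (\<phi>s k) x))\<^sup>2)"
  define B where "B = (\<lambda>k. (nrm \<Omega> (\<lambda>x. v x - \<chi>s k x))\<^sup>2 + (nrmv \<Omega> (\<lambda>x. H x - cgrad (\<chi>s k) x))\<^sup>2)"
  have bound: "(nrm \<Omega> (\<lambda>x. (u x - v x) - \<psi>s k x))\<^sup>2 + (nrmv \<Omega> (\<lambda>x. (G x - H x) - cgrad (\<psi>s k) x))\<^sup>2
      \<le> 2 * A k + 2 * B k" for k
  proof -
    have Lp: "L2 \<Omega> (\<phi>s k)" "L2 \<Omega> (\<chi>s k)" "L2v \<Omega> (cgrad (\<phi>s k))" "L2v \<Omega> (cgrad (\<chi>s k))"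
      using test_L2[OF assms(1,2) \<phi>s(1)] test_L2[OF assms(1,2) \<chi>s(1)] by auto
    have e1: "(\<lambda>x. (u x - v x) - \<psi>s k x) = (\<lambda>x. (u x - \<phi>s k x) - (v x - \<chi>s k x))"
      unfolding \<psi>s_def by (auto simp: algebra_simps)
    have e2: "(\<lambda>x. (G x - H x) - cgrad (\<psi>s k) x) = (\<lambda>x. (G x - cgrad (\<phi>s k) x) - (H x - cgrad (\<chi>s k) x))"
      unfolding cg by (auto simp: algebra_simps)
    have "(nrm \<Omega> (\<lambda>x. (u x - v x) - \<psi>s k x))\<^sup>2 \<le>
        2 * (nrm \<Omega> (\<lambda>x. u x - \<phi>s k x))\<^sup>2 + 2 * (nrm \<Omega> (\<lambda>x. v x - \<chi>s k x))\<^sup>2"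
      unfolding nrm_sq e1 by (intro ip_diff_le L2_diff L Lp)
    moreover have "(nrmv \<Omega> (\<lambda>x. (G x - H x) - cgrad (\<psi>s k) x))\<^sup>2 \<le>
        2 * (nrmv \<Omega> (\<lambda>x. G x - cgrad (\<phi>s k) x))\<^sup>2 + 2 * (nrmv \<Omega> (\<lambda>x. H x - cgrad (\<chi>s k) x))\<^sup>2"
      unfolding nrmv_sq e2 by (intro ipv_diff_le L2v_diff L Lp)
    ultimately show ?thesis unfolding A_def B_def by simp
  qed
  have "(\<lambda>k. 2 * A k + 2 * B k) \<longlonglongrightarrow> 2 * 0 + 2 * 0"
    using \<phi>s(2) \<chi>s(2) unfolding A_def B_def by (intro tendsto_add tendsto_mult_left)
  then have lim: "(\<lambda>k. 2 * A k + 2 * B k) \<longlonglongrightarrow> 0" by simp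
  have "(\<lambda>k. (nrm \<Omega> (\<lambda>x. (u x - v x) - \<psi>s k x))\<^sup>2 + (nrmv \<Omega> (\<lambda>x. (G x - H x) - cgrad (\<psi>s k) x))\<^sup>2) \<longlonglongrightarrow> 0"
    by (rule tendsto_sandwich[OF _ _ tendsto_const lim]) (use bound in auto)
  then show ?thesis unfolding H01_def using H1d t by blast
qed

lemma H01_conv:
  assumes "H01 \<Omega> u G"
  obtains \<phi>s where "\<And>k. test_fun \<Omega> (\<phi>s k)" "(\<lambda>k. nrm \<Omega> (\<lambda>x. u x - \<phi>s k x)) \<longlonglongrightarrow> 0"
    "(\<lambda>k. nrmv \<Omega> (\<lambda>x. G x - cgrad (\<phi>s k) x)) \<longlonglongrightarrow> 0"
proof -
  obtain \<phi>s where \<phi>s: "\<And>k. test_fun \<Omega> (\<phi>s k)"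
    "(\<lambda>k. (nrm \<Omega> (\<lambda>x. u x - \<phi>s k x))\<^sup>2 + (nrmv \<Omega> (\<lambda>x. G x - cgrad (\<phi>s k) x))\<^sup>2) \<longlonglongrightarrow> 0"
    using assms unfolding H01_def by blast
  have a: "(\<lambda>k. (nrm \<Omega> (\<lambda>x. u x - \<phi>s k x))\<^sup>2) \<longlonglongrightarrow> 0"
    by (rule tendsto_sandwich[OF _ _ tendsto_const \<phi>s(2)]) auto
  have b: "(\<lambda>k. (nrmv \<Omega> (\<lambda>x. G x - cgrad (\<phi>s k) x))\<^sup>2) \<longlonglongrightarrow> 0"
    by (rule tendsto_sandwich[OF _ _ tendsto_const \<phi>s(2)]) auto
  have "(\<lambda>k. sqrt ((nrm \<Omega> (\<lambda>x. u x - \<phi>s k x))\<^sup>2)) \<longlonglongrightarrow> sqrt 0" by (intro tendsto_real_sqrt a)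
  then have a': "(\<lambda>k. nrm \<Omega> (\<lambda>x. u x - \<phi>s k x)) \<longlonglongrightarrow> 0" by (simp add: nrm_nonneg)
  have "(\<lambda>k. sqrt ((nrmv \<Omega> (\<lambda>x. G x - cgrad (\<phi>s k) x))\<^sup>2)) \<longlonglongrightarrow> sqrt 0" by (intro tendsto_real_sqrt b)
  then have b': "(\<lambda>k. nrmv \<Omega> (\<lambda>x. G x - cgrad (\<phi>s k) x)) \<longlonglongrightarrow> 0" by (simp add: nrmv_nonneg)
  show ?thesis using that \<phi>s(1) a' b' by blast
qed

lemma IBP:
  assumes "\<Omega> \<in> lmeasurable" "bounded \<Omega>" "L2v \<Omega> w" "L2 \<Omega> D" "weak_div \<Omega> w D" "H01 \<Omega> \<psi> G"
  shows "ipv \<Omega> w G = - ip \<Omega> D \<psi>"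
proof -
  obtain \<phi>s where \<phi>s: "\<And>k. test_fun \<Omega> (\<phi>s k)" "(\<lambda>k. nrm \<Omega> (\<lambda>x. \<psi> x - \<phi>s k x)) \<longlonglongrightarrow> 0"
    "(\<lambda>k. nrmv \<Omega> (\<lambda>x. G x - cgrad (\<phi>s k) x)) \<longlonglongrightarrow> 0"
    using H01_conv[OF assms(6)] by blast
  have L: "L2 \<Omega> \<psi>" "L2v \<Omega> G" using assms(6) unfolding H01_def H1_def by auto
  have Lp: "\<And>k. L2 \<Omega> (\<phi>s k)" "\<And>k. L2v \<Omega> (cgrad (\<phi>s k))"
    using test_L2[OF assms(1,2) \<phi>s(1)] by auto
  have eq: "ipv \<Omega> w (cgrad (\<phi>s k)) = - ip \<Omega> D (\<phi>s k)" for k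
    using assms(5) \<phi>s(1)[of k] unfolding weak_div_def ipv_def ip_def by simp
  have d1: "ipv \<Omega> w G - ipv \<Omega> w (cgrad (\<phi>s k)) = ipv \<Omega> w (\<lambda>x. G x - cgrad (\<phi>s k) x)" for k
    unfolding ipv_def using L2v_inner_int[OF assms(3) L(2)] L2v_inner_int[OF assms(3) Lp(2)[of k]]
    by (simp add: inner_diff_right Bochner_Integration.integral_diff)
  have d2: "ip \<Omega> D \<psi> - ip \<Omega> D (\<phi>s k) = ip \<Omega> D (\<lambda>x. \<psi> x - \<phi>s k x)" for k
    unfolding ip_def using L2_mult_int[OF assms(4) L(1)] L2_mult_int[OF assms(4) Lp(1)[of k]]
    by (simp add: right_diff_distrib Bochner_Integration.integral_diff)
  have c1: "(\<lambda>k. ipv \<Omega> w G - ipv \<Omega> w (cgrad (\<phi>s k))) \<longlonglongrightarrow> 0"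
  proof (rule Lim_null_comparison)
    show "\<forall>\<^sub>F k in sequentially. norm (ipv \<Omega> w G - ipv \<Omega> w (cgrad (\<phi>s k))) \<le> nrmv \<Omega> w * nrmv \<Omega> (\<lambda>x. G x - cgrad (\<phi>s k) x)"
      unfolding d1 using ipv_CS[OF assms(3) L2v_diff[OF L(2) Lp(2)]] by auto
    show "(\<lambda>k. nrmv \<Omega> w * nrmv \<Omega> (\<lambda>x. G x - cgrad (\<phi>s k) x)) \<longlonglongrightarrow> 0"
      using tendsto_mult_left[OF \<phi>s(3), of "nrmv \<Omega> w"] by simp
  qed
  have c2: "(\<lambda>k. ip \<Omega> D \<psi> - ip \<Omega> D (\<phi>s k)) \<longlonglongrightarrow> 0"
  proof (rule Lim_null_comparison)
    show "\<forall>\<^sub>F k in sequentially. norm (ip \<Omega> D \<psi> - ip \<Omega> D (\<phi>s k)) \<le> nrm \<Omega> D * nrm \<Omega> (\<lambda>x. \<psi> x - \<phi>s k x)"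
      unfolding d2 using ip_CS[OF assms(4) L2_diff[OF L(1) Lp(1)]] by auto
    show "(\<lambda>k. nrm \<Omega> D * nrm \<Omega> (\<lambda>x. \<psi> x - \<phi>s k x)) \<longlonglongrightarrow> 0"
      using tendsto_mult_left[OF \<phi>s(2), of "nrm \<Omega> D"] by simp
  qed
  have l1: "(\<lambda>k. ipv \<Omega> w (cgrad (\<phi>s k))) \<longlonglongrightarrow> ipv \<Omega> w G"
    using tendsto_diff[OF tendsto_const c1, of "ipv \<Omega> w G"] by simp
  have l2: "(\<lambda>k. ip \<Omega> D (\<phi>s k)) \<longlonglongrightarrow> ip \<Omega> D \<psi>"
    using tendsto_diff[OF tendsto_const c2, of "ip \<Omega> D \<psi>"] by simp
  have l3: "(\<lambda>k. ipv \<Omega> w (cgrad (\<phi>s k))) \<longlonglongrightarrow> - ip \<Omega> D \<psi>"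
    unfolding eq by (intro tendsto_minus l2)
  show ?thesis using LIMSEQ_unique[OF l1 l3] .
qed




lemma meas_AE_lebesgue_on:
  fixes f g :: "real^'n \<Rightarrow> real"
  assumes "\<Omega> \<in> sets lebesgue" "f \<in> borel_measurable (lebesgue_on \<Omega>)"
    "AE x in lebesgue_on \<Omega>. f x = g x"
  shows "g \<in> borel_measurable (lebesgue_on \<Omega>)"
proof -
  have s: "\<Omega> \<inter> space lebesgue \<in> sets lebesgue" using assms(1) by simp
  have "(\<lambda>x. indicator \<Omega> x *\<^sub>R f x) \<in> borel_measurable lebesgue"
    using assms(2) borel_measurable_restrict_space_iff[OF s] by blast
  moreover have "AE x in lebesgue. indicator \<Omega> x *\<^sub>R f x = indicator \<Omega> x *\<^sub>R g x"
  proof -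
    have "AE x in lebesgue. x \<in> \<Omega> \<longrightarrow> f x = g x"
      using assms(3) by (subst (asm) AE_restrict_space_iff[OF s])
    then show ?thesis by eventually_elim (auto simp: indicator_def)
  qed
  ultimately have "(\<lambda>x. indicator \<Omega> x *\<^sub>R g x) \<in> borel_measurable lebesgue"
    by (rule borel_measurable_AE)
  then show ?thesis using borel_measurable_restrict_space_iff[OF s] by blast
qed

lemma ip_diff_left:
  assumes "L2 \<Omega> a" "L2 \<Omega> b" "L2 \<Omega> c"
  shows "ip \<Omega> (\<lambda>x. a x - b x) c = ip \<Omega> a c - ip \<Omega> b c"
  unfolding ip_def using L2_mult_int[OF assms(1,3)] L2_mult_int[OF assms(2,3)]
  by (simp add: left_diff_distrib Bochner_Integration.integral_diff)

lemma ip_add_left: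
  assumes "L2 \<Omega> a" "L2 \<Omega> b" "L2 \<Omega> c"
  shows "ip \<Omega> (\<lambda>x. a x + b x) c = ip \<Omega> a c + ip \<Omega> b c"
  unfolding ip_def using L2_mult_int[OF assms(1,3)] L2_mult_int[OF assms(2,3)]
  by (simp add: distrib_right Bochner_Integration.integral_add)

lemma ip_mult_left: "ip \<Omega> (\<lambda>x. r * a x) c = r * ip \<Omega> a c"
  unfolding ip_def by (simp add: mult.assoc)

lemma ipv_diff_left:
  assumes "L2v \<Omega> a" "L2v \<Omega> b" "L2v \<Omega> c"
  shows "ipv \<Omega> (\<lambda>x. a x - b x) c = ipv \<Omega> a c - ipv \<Omega> b c"
  unfolding ipv_def using L2v_inner_int[OF assms(1,3)] L2v_inner_int[OF assms(2,3)]
  by (simp add: inner_diff_left Bochner_Integration.integral_diff)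

lemma ipv_add_left:
  assumes "L2v \<Omega> a" "L2v \<Omega> b" "L2v \<Omega> c"
  shows "ipv \<Omega> (\<lambda>x. a x + b x) c = ipv \<Omega> a c + ipv \<Omega> b c"
  unfolding ipv_def using L2v_inner_int[OF assms(1,3)] L2v_inner_int[OF assms(2,3)]
  by (simp add: inner_add_left Bochner_Integration.integral_add)

lemma final_arith:
  fixes tau lam C X Y a b E W Z :: real
  assumes "tau > 0" "lam > 0" "C > 0"
    "tau * X\<^sup>2 + Y / lam = - tau * W - Z / lam"
    "\<bar>W\<bar> \<le> a * X" "\<bar>Z\<bar> \<le> b * E" "E \<le> C * X" "0 \<le> X" "0 \<le> a" "0 \<le> b" "0 \<le> E"
  shows "3/4 * tau * X\<^sup>2 + (2 / lam) * Y \<le> (sqrt tau * a)\<^sup>2 + 4 * C\<^sup>2 * (1 / (lam * sqrt tau) * b)\<^sup>2"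
proof -
  have r1: "(sqrt tau * a)\<^sup>2 = tau * a\<^sup>2" using assms(1) by (simp add: power_mult_distrib)
  have r2: "(1 / (lam * sqrt tau) * b)\<^sup>2 = b\<^sup>2 / (lam\<^sup>2 * tau)"
    using assms(1) by (simp add: power_mult_distrib power_divide)
  have h1: "- tau * W \<le> tau * (a * X)"
  proof -
    have "- W \<le> a * X" using assms(5) by linarith
    then show ?thesis using assms(1) mult_left_mono[of "-W" "a*X" tau] by simp
  qed
  have h2: "- Z / lam \<le> C * b * X / lam"
  proof -
    have "b * E \<le> b * (C * X)" using assms(7,10) by (rule mult_left_mono[OF _ ]) 
    then have "- Z \<le> C * b * X" using assms(6) by (simp add: algebra_simps)
    then show ?thesis using assms(2) divide_right_mono[of "-Z" "C * b * X" lam] by simp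
  qed
  have h3: "tau * (a * X) \<le> tau * X\<^sup>2 / 2 + tau * a\<^sup>2 / 2"
  proof -
    have "0 \<le> tau * (X - a)\<^sup>2" using assms(1) by simp
    then show ?thesis by (simp add: power2_eq_square algebra_simps)
  qed
  have h4: "C * b * X / lam \<le> tau * X\<^sup>2 / 8 + 2 * C\<^sup>2 * (b\<^sup>2 / (lam\<^sup>2 * tau))"
  proof -
    have "0 \<le> (lam * tau * X - 4 * C * b)\<^sup>2" by simp
    then have "8 * lam * tau * C * b * X \<le> lam\<^sup>2 * tau\<^sup>2 * X\<^sup>2 + 16 * C\<^sup>2 * b\<^sup>2"
      by (simp add: power2_eq_square algebra_simps)
    then have "(8 * lam * tau * C * b * X) / (8 * lam\<^sup>2 * tau) \<le> (lam\<^sup>2 * tau\<^sup>2 * X\<^sup>2 + 16 * C\<^sup>2 * b\<^sup>2) / (8 * lam\<^sup>2 * tau)"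
      using assms(1,2) by (intro divide_right_mono) auto
    moreover have "(8 * lam * tau * C * b * X) / (8 * lam\<^sup>2 * tau) = C * b * X / lam"
      using assms(1,2) by (simp add: power2_eq_square field_simps)
    moreover have "(lam\<^sup>2 * tau\<^sup>2 * X\<^sup>2 + 16 * C\<^sup>2 * b\<^sup>2) / (8 * lam\<^sup>2 * tau) = tau * X\<^sup>2 / 8 + 2 * C\<^sup>2 * (b\<^sup>2 / (lam\<^sup>2 * tau))"
      using assms(1,2) by (simp add: power2_eq_square field_simps)
    ultimately show ?thesis by simp
  qed
  have "tau * X\<^sup>2 + Y / lam \<le> 5/8 * tau * X\<^sup>2 + tau * a\<^sup>2 / 2 + 2 * C\<^sup>2 * (b\<^sup>2 / (lam\<^sup>2 * tau))"
    using assms(4) h1 h2 h3 h4 by linarith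
  then have "3/4 * tau * X\<^sup>2 + 2 * (Y / lam) \<le> tau * a\<^sup>2 + 4 * C\<^sup>2 * (b\<^sup>2 / (lam\<^sup>2 * tau))"
    by linarith
  then show ?thesis unfolding r1 r2 by simp
qed




theorem lemma3p2:
  fixes \<Omega> :: "(real^'n) set" and \<T> :: "(real^'n) set set"
    and \<mu> lam \<tau> C\<^sub>F :: real
    and f :: "real^'n \<Rightarrow> real^'n" and g :: "real^'n \<Rightarrow> real"
    and u :: "real^'n \<Rightarrow> real^'n" and Du :: "real^'n \<Rightarrow> real^'n^'n"
    and p \<phi> :: "real^'n \<Rightarrow> real" and G\<phi> :: "real^'n \<Rightarrow> real^'n"
    and uh :: "real^'n \<Rightarrow> real^'n" and Duh :: "real^'n \<Rightarrow> real^'n^'n"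
    and ph \<phi>h P\<phi>h :: "real^'n \<Rightarrow> real" and G\<phi>h :: "real^'n \<Rightarrow> real^'n"
    and w :: "real^'n \<Rightarrow> real^'n" and Dw :: "real^'n \<Rightarrow> real"
  assumes dim: "CARD('n) = 2 \<or> CARD('n) = 3"
    and dom: "lipschitz_domain \<Omega>"
    and mesh: "conforming_triangulation \<Omega> \<T>"
    and params: "\<mu> > 0" "lam > 0" "\<tau> > 0"
    and data: "L2v \<Omega> f" "L2 \<Omega> g"
    and exact_spaces: "H01v \<Omega> u Du" "L2 \<Omega> p" "H01 \<Omega> \<phi> G\<phi>"
    and eq1: "\<And>v Dv. H01v \<Omega> v Dv \<Longrightarrow>
        2 * \<mu> * ipm \<Omega> (\<lambda>x. symgrad (Du x)) (\<lambda>x. symgrad (Dv x)) - ip \<Omega> p (\<lambda>x. divj (Dv x))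
          = ipv \<Omega> f v"
    and eq2: "\<And>q. L2 \<Omega> q \<Longrightarrow>
        ip \<Omega> (\<lambda>x. divj (Du x)) q + (1 / lam) * ip \<Omega> (\<lambda>x. p x - \<phi> x) q = 0"
    and eq3: "\<And>\<psi> G\<psi>. H01 \<Omega> \<psi> G\<psi> \<Longrightarrow>
        (1 / lam) * ip \<Omega> (\<lambda>x. \<phi> x - p x) \<psi> + \<tau> * ipv \<Omega> G\<phi> G\<psi> = ip \<Omega> g \<psi>"
    and discrete_spaces: "Vh \<Omega> \<T> uh Duh" "ph \<in> Qh \<Omega> \<T>" "Sh \<Omega> \<T> \<phi>h G\<phi>h"
    and eq1h: "\<And>v Dv. Vh \<Omega> \<T> v Dv \<Longrightarrow>
        2 * \<mu> * ipm \<Omega> (\<lambda>x. symgrad (Duh x)) (\<lambda>x. symgrad (Dv x)) - ip \<Omega> ph (\<lambda>x. divj (Dv x))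
          = ipv \<Omega> f v"
    and eq2h: "\<And>q. q \<in> Qh \<Omega> \<T> \<Longrightarrow>
        ip \<Omega> (\<lambda>x. divj (Duh x)) q + (1 / lam) * ip \<Omega> (\<lambda>x. ph x - \<phi>h x) q = 0"
    and eq3h: "\<And>\<psi> G\<psi>. Sh \<Omega> \<T> \<psi> G\<psi> \<Longrightarrow>
        (1 / lam) * ip \<Omega> (\<lambda>x. \<phi>h x - ph x) \<psi> + \<tau> * ipv \<Omega> G\<phi>h G\<psi> = ip \<Omega> g \<psi>"
    and proj: "is_P1_projection \<Omega> \<T> \<phi>h P\<phi>h"
    and w_Hdiv: "Hdiv \<Omega> w" and w_div: "weak_div \<Omega> w Dw"
    and w_eq: "AE x in lebesgue_on \<Omega>. \<tau> * Dw x = g x + (ph x - P\<phi>h x) / lam"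
    and CF_pos: "C\<^sub>F > 0"
    and CF: "\<And>\<psi> G\<psi>. H01 \<Omega> \<psi> G\<psi> \<Longrightarrow> nrm \<Omega> \<psi> \<le> C\<^sub>F * nrmv \<Omega> G\<psi>"
  shows "3/4 * \<tau> * (nrmv \<Omega> (\<lambda>x. G\<phi> x - G\<phi>h x))\<^sup>2
           + (2 / lam) * ip \<Omega> (\<lambda>x. \<phi> x - \<phi>h x - (p x - ph x)) (\<lambda>x. \<phi> x - \<phi>h x)
         \<le> (sqrt \<tau> * nrmv \<Omega> (\<lambda>x. w x + G\<phi>h x))\<^sup>2
           + 4 * C\<^sub>F\<^sup>2 * (1 / (lam * sqrt \<tau>) * nrm \<Omega> (\<lambda>x. \<phi>h x - P\<phi>h x))\<^sup>2"
proof -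
  let ?e = "\<lambda>x. \<phi> x - \<phi>h x"
  let ?Ge = "\<lambda>x. G\<phi> x - G\<phi>h x"
  have Oo: "open \<Omega>" and Ob: "bounded \<Omega>" using dom unfolding lipschitz_domain_def by auto
  have Ol: "\<Omega> \<in> lmeasurable" by (rule lmeasurable_open[OF Ob Oo])
  have Os: "\<Omega> \<in> sets lebesgue" using Ol by (simp add: fmeasurableD)
  have H0h: "H01 \<Omega> \<phi>h G\<phi>h" using discrete_spaces(3) unfolding Sh_def by auto
  have He: "H01 \<Omega> ?e ?Ge" by (rule H01_diff[OF Ol Ob exact_spaces(3) H0h])
  have Lphi: "L2 \<Omega> \<phi>" "L2v \<Omega> G\<phi>" using exact_spaces(3) unfolding H01_def H1_def by auto
  have Lh: "L2 \<Omega> \<phi>h" "L2v \<Omega> G\<phi>h" using H0h unfolding H01_def H1_def by auto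
  have Le: "L2 \<Omega> ?e" "L2v \<Omega> ?Ge" using He unfolding H01_def H1_def by auto
  have Lp: "L2 \<Omega> p" by (rule exact_spaces(2))
  have Lg: "L2 \<Omega> g" by (rule data(2))
  have LP: "L2 \<Omega> P\<phi>h" using proj unfolding is_P1_projection_def by auto
  have Lw: "L2v \<Omega> w" using w_Hdiv unfolding Hdiv_def by auto
  have Lph: "L2 \<Omega> ph"
  proof -
    have c: "continuous_on (closure \<Omega>) ph" using discrete_spaces(2) unfolding Qh_def by auto
    have "compact (ph ` closure \<Omega>)" using c Ob by (intro compact_continuous_image) (auto simp: compact_closure)
    then have "bounded (ph ` closure \<Omega>)" by (rule compact_imp_bounded)
    then obtain B where B: "\<forall>y\<in>ph ` closure \<Omega>. norm y \<le> B" by (auto simp: bounded_pos)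
    show ?thesis
    proof (rule L2_bounded_cont[OF Ol])
      show "continuous_on \<Omega> ph" using c closure_subset by (rule continuous_on_subset)
      fix x assume "x \<in> \<Omega>"
      then have "x \<in> closure \<Omega>" using closure_subset by blast
      then show "\<bar>ph x\<bar> \<le> B" using B by auto
    qed
  qed
  define D' where "D' = (\<lambda>x. (1 / \<tau>) * (g x + (1 / lam) * (ph x - P\<phi>h x)))"
  have LD: "L2 \<Omega> D'" unfolding D'_def
    by (intro L2_scale L2_add Lg L2_diff Lph LP)
  have AED: "AE x in lebesgue_on \<Omega>. D' x = Dw x"
    using w_eq
  proof eventually_elim
    case (elim x)
    then show ?case using params unfolding D'_def by (simp add: field_simps)
  qed
  have mD': "D' \<in> borel_measurable (lebesgue_on \<Omega>)" using LD unfolding L2_def by auto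
  have mDw: "Dw \<in> borel_measurable (lebesgue_on \<Omega>)" by (rule meas_AE_lebesgue_on[OF Os mD' AED])
  have LDw: "L2 \<Omega> Dw"
  proof -
    have "integrable (lebesgue_on \<Omega>) (\<lambda>x. (D' x)\<^sup>2) \<longleftrightarrow> integrable (lebesgue_on \<Omega>) (\<lambda>x. (Dw x)\<^sup>2)"
      using mD' mDw by (intro integrable_cong_AE) (auto intro: AE_mp[OF AED])
    then show ?thesis using LD mDw unfolding L2_def by auto
  qed
  have IBPe: "ipv \<Omega> w ?Ge = - ip \<Omega> Dw ?e"
    by (rule IBP[OF Ol Ob Lw LDw w_div He])
  have me: "?e \<in> borel_measurable (lebesgue_on \<Omega>)" using Le unfolding L2_def by auto
  have DwD: "ip \<Omega> Dw ?e = ip \<Omega> D' ?e"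
    unfolding ip_def using mD' mDw me
    by (intro integral_cong_AE) (auto intro: AE_mp[OF AED])
  have L1: "L2 \<Omega> (\<lambda>x. (1 / lam) * (ph x - P\<phi>h x))" by (intro L2_scale L2_diff Lph LP)
  have D'e: "ip \<Omega> D' ?e = (1 / \<tau>) * (ip \<Omega> g ?e + (1 / lam) * (ip \<Omega> ph ?e - ip \<Omega> P\<phi>h ?e))"
  proof -
    have "ip \<Omega> D' ?e = (1 / \<tau>) * ip \<Omega> (\<lambda>x. g x + (1 / lam) * (ph x - P\<phi>h x)) ?e"
      unfolding D'_def by (rule ip_mult_left)
    also have "ip \<Omega> (\<lambda>x. g x + (1 / lam) * (ph x - P\<phi>h x)) ?e
        = ip \<Omega> g ?e + ip \<Omega> (\<lambda>x. (1 / lam) * (ph x - P\<phi>h x)) ?e"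
      by (rule ip_add_left[OF Lg L1 Le(1)])
    also have "ip \<Omega> (\<lambda>x. (1 / lam) * (ph x - P\<phi>h x)) ?e = (1 / lam) * ip \<Omega> (\<lambda>x. ph x - P\<phi>h x) ?e"
      by (rule ip_mult_left)
    also have "ip \<Omega> (\<lambda>x. ph x - P\<phi>h x) ?e = ip \<Omega> ph ?e - ip \<Omega> P\<phi>h ?e"
      by (rule ip_diff_left[OF Lph LP Le(1)])
    finally show ?thesis .
  qed
  have E3: "(1 / lam) * ip \<Omega> (\<lambda>x. \<phi> x - p x) ?e + \<tau> * ipv \<Omega> G\<phi> ?Ge = ip \<Omega> g ?e"
    by (rule eq3[OF He])
  have X2: "(nrmv \<Omega> ?Ge)\<^sup>2 = ipv \<Omega> G\<phi> ?Ge - ipv \<Omega> G\<phi>h ?Ge"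
    unfolding nrmv_sq by (rule ipv_diff_left[OF Lphi(2) Lh(2) Le(2)])
  have Yeq: "ip \<Omega> (\<lambda>x. \<phi> x - \<phi>h x - (p x - ph x)) ?e
      = ip \<Omega> (\<lambda>x. \<phi> x - p x) ?e - (ip \<Omega> \<phi>h ?e - ip \<Omega> ph ?e)"
  proof -
    have "(\<lambda>x. \<phi> x - \<phi>h x - (p x - ph x)) = (\<lambda>x. (\<phi> x - p x) - (\<phi>h x - ph x))"
      by (auto simp: algebra_simps)
    then have "ip \<Omega> (\<lambda>x. \<phi> x - \<phi>h x - (p x - ph x)) ?e
        = ip \<Omega> (\<lambda>x. \<phi> x - p x) ?e - ip \<Omega> (\<lambda>x. \<phi>h x - ph x) ?e"
      using ip_diff_left[OF L2_diff[OF Lphi(1) Lp] L2_diff[OF Lh(1) Lph] Le(1)] by simp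
    also have "ip \<Omega> (\<lambda>x. \<phi>h x - ph x) ?e = ip \<Omega> \<phi>h ?e - ip \<Omega> ph ?e"
      by (rule ip_diff_left[OF Lh(1) Lph Le(1)])
    finally show ?thesis .
  qed
  have Weq: "ipv \<Omega> (\<lambda>x. w x + G\<phi>h x) ?Ge = ipv \<Omega> w ?Ge + ipv \<Omega> G\<phi>h ?Ge"
    by (rule ipv_add_left[OF Lw Lh(2) Le(2)])
  have Zeq: "ip \<Omega> (\<lambda>x. \<phi>h x - P\<phi>h x) ?e = ip \<Omega> \<phi>h ?e - ip \<Omega> P\<phi>h ?e"
    by (rule ip_diff_left[OF Lh(1) LP Le(1)])
  have key: "\<tau> * (nrmv \<Omega> ?Ge)\<^sup>2 + ip \<Omega> (\<lambda>x. \<phi> x - \<phi>h x - (p x - ph x)) ?e / lam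
      = - \<tau> * ipv \<Omega> (\<lambda>x. w x + G\<phi>h x) ?Ge - ip \<Omega> (\<lambda>x. \<phi>h x - P\<phi>h x) ?e / lam"
  proof -
    have Iw: "\<tau> * ipv \<Omega> w ?Ge = - (ip \<Omega> g ?e + (1 / lam) * (ip \<Omega> ph ?e - ip \<Omega> P\<phi>h ?e))"
      using IBPe DwD D'e params by simp
    show ?thesis unfolding X2 Yeq Weq Zeq using Iw E3 params
      by (simp add: field_simps)
  qed
  have CSW: "\<bar>ipv \<Omega> (\<lambda>x. w x + G\<phi>h x) ?Ge\<bar> \<le> nrmv \<Omega> (\<lambda>x. w x + G\<phi>h x) * nrmv \<Omega> ?Ge"
    by (rule ipv_CS[OF L2v_add[OF Lw Lh(2)] Le(2)])
  have CSZ: "\<bar>ip \<Omega> (\<lambda>x. \<phi>h x - P\<phi>h x) ?e\<bar> \<le> nrm \<Omega> (\<lambda>x. \<phi>h x - P\<phi>h x) * nrm \<Omega> ?e"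
    by (rule ip_CS[OF L2_diff[OF Lh(1) LP] Le(1)])
  have CFe: "nrm \<Omega> ?e \<le> C\<^sub>F * nrmv \<Omega> ?Ge" by (rule CF[OF He])
  show ?thesis
    by (rule final_arith[OF params(3) params(2) CF_pos key CSW CSZ CFe nrmv_nonneg nrmv_nonneg nrm_nonneg nrm_nonneg])
qed


end
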